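(* Let $\mathcal{A}$ be a finite or countable alphabet, $\mathcal{M}$ a countable set of probability measures on $\mathcal{A}^\infty$, $w:\mathcal{M}\to(0,1]$ a prior with $\sum_\nu w_\nu=1$, $\xi$ the Bayes mixture, $\mu\in\mathcal{M}$ and $\delta\in(0,1)$, with $\hat d_t:=c_t/(w_\mu\delta)$. Then: (1) $\mathbb{E}_\mu\sum_{t=1}^\infty\hat d_t\le\frac{\mathrm{Ent}(w)}{\delta w_\mu^2}$; (2) with $\mu$-probability at least $1-\delta$, $\sum_{t=1}^\infty\hat d_t\le\frac{\mathrm{Ent}(w)}{\delta^2w_\mu^2}$.
   Context: $\mathcal{A}^\infty$ carries the $\sigma$-algebra generated by cylinders $\Gamma_x=\{x\omega\}$; for a measure $\rho$, $\rho(x):=\rho(\Gamma_x)$, $\rho(y|x):=\rho(xy)/\rho(x)$. Bayes mixture $\xi(A):=\sum_\nu w_\nu\nu(A)$; posterior $w_\nu(x):=w_\nu\nu(x)/\xi(x)$; entropy $\mathrm{Ent}(w):=-\sum_\nu w_\nu\ln w_\nu$ (natural logs). For a finite string $x$, $d_x(\nu,\xi):=\sum_a\nu(a|x)\ln\frac{\nu(a|x)}{\xi(a|x)}$, and for $\omega\in\mathcal{A}^\infty$, $c_t(\omega):=\sum_{\nu\in\mathcal{M}}w_\nu(\omega_{<t})d_{\omega_{<t}}(\nu,\xi)$ with $\omega_{<t}=\omega_1\cdots\omega_{t-1}$. *)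

theory Defs
  imports "HOL-Probability.Probability"
begin

text \<open>Infinite sequences over the alphabet 'a are streams; the sigma algebra on them
is that of stream_space (count_space UNIV), generated by the cylinders.\<close>

definition cyl :: "'a list \<Rightarrow> 'a stream set" where
  "cyl x = {\<omega>. stake (length x) \<omega> = x}"

definition mcyl :: "'a stream measure \<Rightarrow> 'a list \<Rightarrow> real" where
  "mcyl \<rho> x = measure \<rho> (cyl x)"

definition condp :: "('a list \<Rightarrow> real) \<Rightarrow> 'a list \<Rightarrow> 'a \<Rightarrow> real" where
  "condp f x a = f (x @ [a]) / f x"

definition xi :: "'a stream measure set \<Rightarrow> ('a stream measure \<Rightarrow> real) \<Rightarrow> 'a list \<Rightarrow> real" where
  "xi M w x = (\<Sum>\<^sub>\<infinity>\<nu>\<in>M. w \<nu> * mcyl \<nu> x)"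

definition post :: "'a stream measure set \<Rightarrow> ('a stream measure \<Rightarrow> real) \<Rightarrow> 'a stream measure \<Rightarrow> 'a list \<Rightarrow> real" where
  "post M w \<nu> x = w \<nu> * mcyl \<nu> x / xi M w x"

definition dkl :: "'a stream measure set \<Rightarrow> ('a stream measure \<Rightarrow> real) \<Rightarrow> 'a stream measure \<Rightarrow> 'a list \<Rightarrow> real" where
  "dkl M w \<nu> x = (\<Sum>\<^sub>\<infinity>a\<in>UNIV. condp (mcyl \<nu>) x a * ln (condp (mcyl \<nu>) x a / condp (xi M w) x a))"

text \<open>c_t(omega) = sum_nu w_nu(omega_<t) d_{omega_<t}(nu,xi), with omega_<t = stake (t-1) omega,
  valued in [0,\<infinity>] since the sum over a countable model class may diverge.\<close>
definition ct :: "'a stream measure set \<Rightarrow> ('a stream measure \<Rightarrow> real) \<Rightarrow> nat \<Rightarrow> 'a stream \<Rightarrow> ennreal" where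
  "ct M w t \<omega> = (\<Sum>\<^sub>\<infinity>\<nu>\<in>M. ennreal (post M w \<nu> (stake (t - 1) \<omega>) * dkl M w \<nu> (stake (t - 1) \<omega>)))"

definition Ent :: "'a stream measure set \<Rightarrow> ('a stream measure \<Rightarrow> real) \<Rightarrow> ennreal" where
  "Ent M w = (\<Sum>\<^sub>\<infinity>\<nu>\<in>M. ennreal (- w \<nu> * ln (w \<nu>)))"

definition dhat :: "'a stream measure set \<Rightarrow> ('a stream measure \<Rightarrow> real) \<Rightarrow> 'a stream measure \<Rightarrow> real \<Rightarrow> nat \<Rightarrow> 'a stream \<Rightarrow> ennreal" where
  "dhat M w \<mu> \<delta> t \<omega> = ct M w t \<omega> / ennreal (w \<mu> * \<delta>)"

end

theory Submission
  imports Defs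
begin


lemma ens_summable[simp]: "(f::_ \<Rightarrow> ennreal) summable_on A"
  by (simp add: nonneg_summable_on_complete)

lemma ennreal_infsum:
  fixes f :: "'b \<Rightarrow> real"
  assumes "f summable_on A" "\<And>x. x \<in> A \<Longrightarrow> 0 \<le> f x"
  shows "infsum (\<lambda>x. ennreal (f x)) A = ennreal (infsum f A)"
proof -
  have "\<And>F. \<lbrakk>finite F; F \<subseteq> A\<rbrakk> \<Longrightarrow> sum (ennreal \<circ> f) F = ennreal (sum f F)"
    by (metis (mono_tags, lifting) comp_def assms(2) subsetD sum.cong sum_ennreal)
  then have "infsum (ennreal \<circ> f) A = ennreal (infsum f A)"
    by (simp add: infsum_comm_additive_general assms(1))
  then show ?thesis by (simp add: comp_def)
qed

lemma has_sum_of_ennreal: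
  fixes f :: "'b \<Rightarrow> real"
  assumes "\<And>x. x \<in> A \<Longrightarrow> 0 \<le> f x" "infsum (\<lambda>x. ennreal (f x)) A = ennreal c" "0 \<le> c"
  shows "(f has_sum c) A"
proof -
  have bd: "sum f F \<le> c" if "finite F" "F \<subseteq> A" for F
  proof -
    have "ennreal (sum f F) = sum (\<lambda>x. ennreal (f x)) F"
      using that assms(1) by (subst sum_ennreal[symmetric]) (auto intro!: sum.cong)
    also have "\<dots> = infsum (\<lambda>x. ennreal (f x)) F" using that by simp
    also have "\<dots> \<le> infsum (\<lambda>x. ennreal (f x)) A"
      by (rule infsum_mono_neutral) (use that in \<open>auto\<close>)
    finally show ?thesis using assms(2,3) by simp
  qed
  have sm: "f summable_on A"
    by (rule nonneg_bdd_above_summable_on) (use assms(1) bd in \<open>auto simp: bdd_above_def\<close>)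
  have "ennreal (infsum f A) = ennreal c" using ennreal_infsum[OF sm assms(1)] assms(2) by simp
  then have "infsum f A = c" using assms(3) infsum_nonneg[of A f] assms(1) by simp
  then show ?thesis using sm by (metis has_sum_infsum)
qed

lemma infsum_nn_integral:
  fixes f :: "'b \<Rightarrow> ennreal"
  assumes "countable A"
  shows "infsum f A = (\<integral>\<^sup>+x. f x \<partial>count_space A)"
proof (rule antisym)
  have "infsum f A = (SUP F\<in>{F. finite F \<and> F\<subseteq>A}. sum f F)"
    by (rule nonneg_infsum_complete) auto
  also have "\<dots> \<le> (\<integral>\<^sup>+x. f x \<partial>count_space A)"
  proof (rule SUP_least, clarify)
    fix F assume F: "finite F" "F \<subseteq> A"
    have "sum f F = (\<integral>\<^sup>+x. f x * indicator F x \<partial>count_space A)"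
      by (subst nn_integral_count_space'[of F]) (use F in auto)
    also have "\<dots> \<le> (\<integral>\<^sup>+x. f x \<partial>count_space A)"
      by (intro nn_integral_mono) (auto split: split_indicator)
    finally show "sum f F \<le> \<dots>" .
  qed
  finally show "infsum f A \<le> (\<integral>\<^sup>+x. f x \<partial>count_space A)" .
next
  show "(\<integral>\<^sup>+x. f x \<partial>count_space A) \<le> infsum f A"
  proof (cases "finite A")
    case True then show ?thesis by (simp add: nn_integral_count_space_finite)
  next
    case False
    define g where "g = from_nat_into A"
    have bij: "bij_betw g UNIV A" using bij_betw_from_nat_into[OF assms False] g_def by simp
    have "(\<integral>\<^sup>+x. f x \<partial>count_space A) = (\<integral>\<^sup>+i. f (g i) \<partial>count_space UNIV)"
      using nn_integral_bij_count_space[OF bij, of f] by simp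
    also have "\<dots> = (\<Sum>i. f (g i))" by (rule nn_integral_count_space_nat)
    also have "\<dots> = (SUP n. \<Sum>i<n. f (g i))" by (rule suminf_eq_SUP)
    also have "\<dots> \<le> infsum f A"
    proof (rule SUP_least)
      fix n
      have inj: "inj_on g {..<n}" using bij by (auto simp: bij_betw_def inj_on_def)
      have "(\<Sum>i<n. f (g i)) = sum f (g ` {..<n})" by (simp add: sum.reindex[OF inj])
      also have "\<dots> = infsum f (g ` {..<n})" by simp
      also have "\<dots> \<le> infsum f A"
        by (rule infsum_mono_neutral) (use bij in \<open>auto simp: bij_betw_def\<close>)
      finally show "(\<Sum>i<n. f (g i)) \<le> infsum f A" .
    qed
    finally show ?thesis .
  qed
qed


lemma ens_swap:
  fixes f :: "'b \<Rightarrow> 'c \<Rightarrow> ennreal"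
  assumes "countable A" "countable B"
  shows "infsum (\<lambda>x. infsum (\<lambda>y. f x y) B) A = infsum (\<lambda>y. infsum (\<lambda>x. f x y) A) B"
proof -
  have "infsum (\<lambda>x. infsum (\<lambda>y. f x y) B) A = (\<integral>\<^sup>+x. (\<integral>\<^sup>+y. f x y \<partial>count_space B) \<partial>count_space A)"
    by (simp only: infsum_nn_integral[OF assms(1)] infsum_nn_integral[OF assms(2)])
  also have "\<dots> = (\<integral>\<^sup>+y. (\<integral>\<^sup>+x. f x y \<partial>count_space A) \<partial>count_space B)"
    by (rule nn_integral_count_space_nn_integral[symmetric]) (use assms in auto)
  also have "\<dots> = infsum (\<lambda>y. infsum (\<lambda>x. f x y) A) B"
    by (simp only: infsum_nn_integral[OF assms(1)] infsum_nn_integral[OF assms(2)])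
  finally show ?thesis .
qed

lemma ens_cmult:
  fixes f :: "'b \<Rightarrow> ennreal"
  assumes "countable A"
  shows "infsum (\<lambda>x. c * f x) A = c * infsum f A"
  by (simp only: infsum_nn_integral[OF assms] nn_integral_cmult borel_measurable_count_space)

lemma ens_mono:
  fixes f :: "'b \<Rightarrow> ennreal"
  assumes "\<And>x. x \<in> A \<Longrightarrow> f x \<le> g x"
  shows "infsum f A \<le> infsum g A"
  by (rule infsum_mono) (use assms in auto)

lemma cyl_Suc: "cyl (x @ [a]) = {\<omega>. stake (length x) \<omega> = x \<and> \<omega> !! length x = a}"
  by (auto simp: cyl_def stake_Suc simp del: stake.simps)

locale tctx =
  fixes M :: "('a::countable) stream measure set" and w :: "'a stream measure \<Rightarrow> real"
  assumes cM: "countable M"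
    and setsM: "\<And>\<nu>. \<nu> \<in> M \<Longrightarrow> sets \<nu> = sets (stream_space (count_space UNIV))"
    and probM: "\<And>\<nu>. \<nu> \<in> M \<Longrightarrow> prob_space \<nu>"
    and wpos: "\<And>\<nu>. \<nu> \<in> M \<Longrightarrow> 0 < w \<nu> \<and> w \<nu> \<le> 1"
    and wsum: "(w has_sum 1) M"
begin

lemma cyl_sets: assumes "\<nu> \<in> M" shows "cyl x \<in> sets \<nu>"
proof -
  have "stake (length x) -` {x} \<inter> space (stream_space (count_space UNIV)) \<in> sets (stream_space (count_space UNIV))"
    by (rule measurable_sets[OF measurable_stake]) simp
  moreover have "stake (length x) -` {x} \<inter> space (stream_space (count_space UNIV)) = cyl x"
    by (auto simp: cyl_def space_stream_space)
  ultimately show ?thesis using setsM[OF assms] by simp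
qed

lemma mcyl_nonneg: "0 \<le> mcyl \<nu> x" by (simp add: mcyl_def)

lemma mcyl_le1: assumes "\<nu> \<in> M" shows "mcyl \<nu> x \<le> 1"
  using prob_space.prob_le_1[OF probM[OF assms]] by (simp add: mcyl_def)

lemma emeasure_cyl: assumes "\<nu> \<in> M" shows "emeasure \<nu> (cyl x) = ennreal (mcyl \<nu> x)"
proof -
  interpret P: prob_space \<nu> by (rule probM[OF assms])
  show ?thesis using P.emeasure_eq_measure by (simp add: mcyl_def)
qed

lemma mcyl_nil: assumes "\<nu> \<in> M" shows "mcyl \<nu> [] = 1"
proof -
  have "cyl [] = space \<nu>"
    using sets_eq_imp_space_eq[OF setsM[OF assms]] by (auto simp: cyl_def space_stream_space)
  then show ?thesis using prob_space.prob_space[OF probM[OF assms]] by (simp add: mcyl_def)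
qed

lemma mcyl_has_sum: assumes "\<nu> \<in> M" shows "((\<lambda>a. mcyl \<nu> (x @ [a])) has_sum mcyl \<nu> x) UNIV"
proof (rule has_sum_of_ennreal)
  have un: "cyl x = (\<Union>a\<in>UNIV. cyl (x @ [a]))" unfolding cyl_Suc by (auto simp: cyl_def simp del: stake.simps)
  have "ennreal (mcyl \<nu> x) = emeasure \<nu> (\<Union>a\<in>UNIV. cyl (x @ [a]))"
    unfolding un[symmetric] by (rule emeasure_cyl[OF assms, symmetric])
  also have "\<dots> = (\<integral>\<^sup>+a. emeasure \<nu> (cyl (x @ [a])) \<partial>count_space UNIV)"
    by (rule emeasure_UN_countable[OF cyl_sets[OF assms]]) (auto simp: disjoint_family_on_def cyl_Suc simp del: stake.simps)
  also have "\<dots> = infsum (\<lambda>a. ennreal (mcyl \<nu> (x @ [a]))) UNIV"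
    by (simp add: infsum_nn_integral emeasure_cyl[OF assms])
  finally show "infsum (\<lambda>a. ennreal (mcyl \<nu> (x @ [a]))) UNIV = ennreal (mcyl \<nu> x)" by simp
qed (auto simp: mcyl_nonneg)

lemma wm_nonneg: assumes "\<nu> \<in> M" shows "0 \<le> w \<nu> * mcyl \<nu> x"
  using wpos[OF assms] mcyl_nonneg[of \<nu> x] by simp

lemma w_summable: "w summable_on M" using wsum by (auto simp: summable_on_def)

lemma wm_summable: "(\<lambda>\<nu>. w \<nu> * mcyl \<nu> x) summable_on M"
proof (rule summable_on_comparison_test[OF w_summable])
  fix \<nu> assume "\<nu> \<in> M"
  then show "w \<nu> * mcyl \<nu> x \<le> w \<nu>" "0 \<le> w \<nu> * mcyl \<nu> x"
    using wpos mcyl_le1 wm_nonneg by (auto intro: mult_left_le)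
qed

lemma xi_ge: assumes "\<nu> \<in> M" shows "w \<nu> * mcyl \<nu> x \<le> xi M w x"
proof -
  have "w \<nu> * mcyl \<nu> x = infsum (\<lambda>\<nu>. w \<nu> * mcyl \<nu> x) {\<nu>}" by simp
  also have "\<dots> \<le> xi M w x" unfolding xi_def
    by (rule infsum_mono_neutral) (use assms wm_summable wm_nonneg in auto)
  finally show ?thesis .
qed

lemma xi_nonneg: "0 \<le> xi M w x"
  unfolding xi_def by (rule infsum_nonneg) (use wm_nonneg in auto)

lemma xi_nil: "xi M w [] = 1"
proof -
  have "xi M w [] = infsum w M" unfolding xi_def by (rule infsum_cong) (simp add: mcyl_nil)
  then show ?thesis by (simp add: infsumI[OF wsum])
qed

lemma xi_has_sum: "((\<lambda>a. xi M w (x @ [a])) has_sum xi M w x) UNIV"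
proof (rule has_sum_of_ennreal)
  have "infsum (\<lambda>a. ennreal (xi M w (x @ [a]))) UNIV
      = infsum (\<lambda>a. infsum (\<lambda>\<nu>. ennreal (w \<nu> * mcyl \<nu> (x @ [a]))) M) UNIV"
    unfolding xi_def
    by (rule infsum_cong, rule ennreal_infsum[symmetric]) (use wm_summable wm_nonneg in auto)
  also have "\<dots> = infsum (\<lambda>\<nu>. infsum (\<lambda>a. ennreal (w \<nu> * mcyl \<nu> (x @ [a]))) UNIV) M"
    by (rule ens_swap) (auto simp: cM)
  also have "\<dots> = infsum (\<lambda>\<nu>. ennreal (w \<nu> * mcyl \<nu> x)) M"
  proof (rule infsum_cong)
    fix \<nu> assume n: "\<nu> \<in> M"
    have hs: "((\<lambda>a. w \<nu> * mcyl \<nu> (x @ [a])) has_sum (w \<nu> * mcyl \<nu> x)) UNIV"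
      by (rule has_sum_cmult_right[OF mcyl_has_sum[OF n]])
    have sm: "(\<lambda>a. w \<nu> * mcyl \<nu> (x @ [a])) summable_on UNIV" using hs by (auto simp: summable_on_def)
    show "infsum (\<lambda>a. ennreal (w \<nu> * mcyl \<nu> (x @ [a]))) UNIV = ennreal (w \<nu> * mcyl \<nu> x)"
      using ennreal_infsum[OF sm] infsumI[OF hs] wm_nonneg[OF n] by simp
  qed
  also have "\<dots> = ennreal (xi M w x)" unfolding xi_def
    by (rule ennreal_infsum) (use wm_summable wm_nonneg in auto)
  finally show "infsum (\<lambda>a. ennreal (xi M w (x @ [a]))) UNIV = ennreal (xi M w x)" .
qed (auto simp: xi_nonneg)

end

lemma has_sum_diff':
  fixes f g :: "'b \<Rightarrow> real"
  assumes "(f has_sum a) A" "(g has_sum b) A"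
  shows "((\<lambda>x. f x - g x) has_sum (a - b)) A"
proof -
  have "((\<lambda>x. - g x) has_sum (- b)) A" using assms(2) has_sum_uminus[where f=g and a="-b" and A=A] by simp
  from has_sum_add[OF assms(1) this] show ?thesis by simp
qed

lemma summable_by_bound:
  fixes f P Q :: "'b \<Rightarrow> real"
  assumes "P summable_on A" "Q summable_on A" "\<And>x. x \<in> A \<Longrightarrow> \<bar>f x\<bar> \<le> c * P x + Q x"
  shows "f summable_on A"
proof -
  have "(\<lambda>x. c * P x + Q x) summable_on A"
    by (intro summable_on_add summable_on_cmult_right assms)
  then have "(\<lambda>x. norm (f x)) summable_on A"
    by (rule summable_on_comparison_test) (use assms(3) in auto)
  then show ?thesis using summable_on_iff_abs_summable_on_real by blast
qed

lemma levelset_bij: "bij_betw (\<lambda>z. fst z @ [snd z]) ({x. length x = t} \<times> UNIV) {x. length x = Suc t}"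
proof (rule bij_betwI[where g = "\<lambda>y. (butlast y, last y)"])
  show "(\<lambda>z. fst z @ [snd z]) \<in> {x. length x = t} \<times> UNIV \<rightarrow> {x. length x = Suc t}" by auto
  show "(\<lambda>y. (butlast y, last y)) \<in> {x. length x = Suc t} \<rightarrow> {x. length (x::'a list) = t} \<times> UNIV" by auto
  show "(butlast (fst z @ [snd z]), last (fst z @ [snd z])) = z" for z :: "'a list \<times> 'a" by simp
  show "fst (butlast y, last y) @ [snd (butlast y, last y)] = y" if "y \<in> {x. length x = Suc t}" for y :: "'a list"
    using that by (cases y rule: rev_cases) auto
qed

lemma level_has_sum:
  "((\<lambda>z. f (fst z @ [snd z])) has_sum S) ({x. length x = t} \<times> UNIV) \<longleftrightarrow> (f has_sum S) {x. length x = Suc t}"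
  by (rule has_sum_reindex_bij_betw[OF levelset_bij])

lemma level_up:
  fixes f :: "'a list \<Rightarrow> real"
  assumes nn: "\<And>x. 0 \<le> f x" and fhs: "\<And>x. ((\<lambda>a. f (x @ [a])) has_sum f x) UNIV"
    and S: "(f has_sum S) {x. length x = t}"
  shows "(f has_sum S) {x. length x = Suc t}"
proof -
  have sm: "(\<lambda>z. f (fst z @ [snd z])) summable_on Sigma {x. length x = t} (\<lambda>_. UNIV)"
    by (rule summable_on_SigmaI[where g = f]) (use fhs S nn in \<open>auto simp: summable_on_def\<close>)
  have "((\<lambda>z. f (fst z @ [snd z])) has_sum S) (Sigma {x. length x = t} (\<lambda>_. UNIV))"
    by (rule has_sum_SigmaI[where g = f, OF _ S sm]) (use fhs in auto)
  then show ?thesis using level_has_sum by blast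
qed

lemma level_down:
  fixes f :: "'a list \<Rightarrow> real"
  assumes S: "(f has_sum S) {x. length x = Suc t}"
    and fhs: "\<And>x. x \<in> {x. length x = t} \<Longrightarrow> ((\<lambda>a. f (x @ [a])) has_sum g x) UNIV"
  shows "(g has_sum S) {x. length x = t}"
proof -
  have "((\<lambda>z. f (fst z @ [snd z])) has_sum S) (Sigma {x. length x = t} (\<lambda>_. UNIV))"
    using S level_has_sum by blast
  then show ?thesis by (rule has_sum_SigmaD) (use fhs in auto)
qed

lemma gibbs_pt:
  fixes P Q :: real
  assumes "0 \<le> P" "0 \<le> Q" "0 < P \<Longrightarrow> 0 < Q"
  shows "P - Q \<le> P * ln (P / Q)"
proof (cases "P = 0")
  case True then show ?thesis using assms by simp
next
  case False
  then have P: "0 < P" and Q: "0 < Q" using assms by auto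
  have "ln (Q / P) \<le> Q / P - 1" using ln_le_minus_one[of "Q/P"] P Q by simp
  moreover have "ln (P / Q) = - ln (Q / P)" using P Q by (simp add: ln_div)
  ultimately have "1 - Q / P \<le> ln (P / Q)" by simp
  then have "P * (1 - Q / P) \<le> P * ln (P / Q)" using P by (intro mult_left_mono) auto
  then show ?thesis using P by (simp add: algebra_simps)
qed

locale kl =
  fixes p q :: "'a list \<Rightarrow> real" and w :: real
  assumes pnn: "\<And>x. 0 \<le> p x" and phs: "\<And>x. ((\<lambda>a. p (x @ [a])) has_sum p x) UNIV" and p0: "p [] = 1"
    and qhs: "\<And>x. ((\<lambda>a. q (x @ [a])) has_sum q x) UNIV" and q0: "q [] = 1"
    and dom: "\<And>x. w * p x \<le> q x" and w0: "0 < w" and w1: "w \<le> 1"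
begin

definition "c = - ln w"
definition "h x = p x * ln (p x / q x)"
definition "T x a = condp p x a * ln (condp p x a / condp q x a)"
definition "D x = infsum (T x) UNIV"
definition "Sh x = infsum (\<lambda>a. h (x @ [a])) UNIV"
definition "H t = infsum h {x. length x = t}"

lemma c_nonneg: "0 \<le> c" unfolding c_def using w0 w1 by simp

lemma qnn: "0 \<le> q x" using dom[of x] pnn[of x] w0 by (smt (verit) mult_nonneg_nonneg)

lemma qpos: "0 < p x \<Longrightarrow> 0 < q x" using dom[of x] w0 by (smt (verit) mult_pos_pos)

lemma h_le: "h x \<le> c * p x"
proof (cases "p x = 0")
  case True then show ?thesis by (simp add: h_def)
next
  case False
  then have P: "0 < p x" using pnn[of x] by simp
  then have Q: "0 < q x" by (rule qpos)
  have "p x / q x \<le> 1 / w" using dom[of x] w0 Q by (simp add: field_simps)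
  then have "ln (p x / q x) \<le> ln (1 / w)" using P Q w0 by (subst ln_le_cancel_iff) auto
  also have "ln (1 / w) = c" unfolding c_def using w0 by (simp add: ln_div)
  finally show ?thesis unfolding h_def using P by (simp add: mult_left_mono mult.commute)
qed

lemma h_ge: "p x - q x \<le> h x"
  unfolding h_def by (rule gibbs_pt) (use pnn qnn qpos in auto)

lemma h_abs: "\<bar>h x\<bar> \<le> c * p x + q x"
  using h_le[of x] h_ge[of x] qnn[of x] pnn[of x] c_nonneg mult_nonneg_nonneg[OF c_nonneg pnn[of x]]
  by linarith

lemma pL: "(p has_sum 1) {x. length x = t}"
proof (induction t)
  case 0
  have "{x::'a list. length x = 0} = {[]}" by auto
  then show ?case using has_sum_finite[of "{[]}" p] p0 by simp
next
  case (Suc t) then show ?case by (rule level_up[OF pnn phs])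
qed

lemma qL: "(q has_sum 1) {x. length x = t}"
proof (induction t)
  case 0
  have "{x::'a list. length x = 0} = {[]}" by auto
  then show ?case using has_sum_finite[of "{[]}" q] q0 by simp
next
  case (Suc t) then show ?case by (rule level_up[OF qnn qhs])
qed

lemma h_summable_L: "h summable_on {x. length x = t}"
  by (rule summable_by_bound[where P = p and Q = q and c = c]) (use pL qL h_abs in \<open>auto simp: summable_on_def\<close>)

lemma h_summable_A: "(\<lambda>a. h (x @ [a])) summable_on UNIV"
  by (rule summable_by_bound[where P = "\<lambda>a. p (x @ [a])" and Q = "\<lambda>a. q (x @ [a])" and c = c])
     (use phs qhs h_abs in \<open>auto simp: summable_on_def\<close>)

lemma child_le: "p (x @ [a]) \<le> p x"
proof -
  have "p (x @ [a]) = infsum (\<lambda>a. p (x @ [a])) {a}" by simp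
  also have "\<dots> \<le> infsum (\<lambda>a. p (x @ [a])) UNIV"
    by (rule infsum_mono_neutral) (use phs pnn in \<open>auto simp: summable_on_def[of _ UNIV]\<close>)
  also have "\<dots> = p x" using phs by (simp add: infsumI)
  finally show ?thesis .
qed

lemma T_eq: "p x * T x a = h (x @ [a]) - p (x @ [a]) * ln (p x / q x)"
proof (cases "p x = 0")
  case True
  then have "p (x @ [a]) = 0" using child_le[of x a] pnn[of "x @ [a]"] by simp
  then show ?thesis using True by (simp add: T_def h_def)
next
  case False
  then have P: "0 < p x" using pnn[of x] by simp
  then have Q: "0 < q x" by (rule qpos)
  show ?thesis
  proof (cases "p (x @ [a]) = 0")
    case True then show ?thesis by (simp add: T_def h_def condp_def)
  next
    case False
    then have P': "0 < p (x @ [a])" using pnn[of "x @ [a]"] by simp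
    then have Q': "0 < q (x @ [a])" by (rule qpos)
    have "(p (x @ [a]) / p x) / (q (x @ [a]) / q x) = (p (x @ [a]) / q (x @ [a])) / (p x / q x)"
      using P Q by (simp add: field_simps)
    then have lneq: "ln ((p (x @ [a]) / p x) / (q (x @ [a]) / q x)) = ln (p (x @ [a]) / q (x @ [a])) - ln (p x / q x)"
      using P Q P' Q' by (simp add: ln_div ln_mult)
    have e1: "p x * T x a = p (x @ [a]) * ln ((p (x @ [a]) / p x) / (q (x @ [a]) / q x))"
      unfolding T_def condp_def using P by simp
    show ?thesis unfolding e1 lneq h_def by (simp add: algebra_simps)
  qed
qed

lemma T_has_sum: "((\<lambda>a. p x * T x a) has_sum (Sh x - h x)) UNIV"
proof -
  have 1: "((\<lambda>a. h (x @ [a])) has_sum Sh x) UNIV" unfolding Sh_def using h_summable_A by simp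
  have 2: "((\<lambda>a. p (x @ [a]) * ln (p x / q x)) has_sum (p x * ln (p x / q x))) UNIV"
    by (rule has_sum_cmult_left[OF phs])
  show ?thesis using has_sum_diff'[OF 1 2] by (simp add: T_eq h_def)
qed

lemma pD: "p x * D x = Sh x - h x"
proof (cases "p x = 0")
  case True
  have "((\<lambda>a::'a. 0::real) has_sum (Sh x - h x)) UNIV" using T_has_sum[of x] True by simp
  then have "Sh x - h x = 0" using has_sum_unique[OF _ has_sum_0_simp] by blast
  then show ?thesis using True by simp
next
  case False
  then have "(T x has_sum ((Sh x - h x) / p x)) UNIV"
    using T_has_sum[of x] has_sum_cmult_right_iff[of "p x" "T x"] by simp
  then have "D x = (Sh x - h x) / p x" unfolding D_def by (simp add: infsumI)
  then show ?thesis using False by simp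
qed

lemma D_nonneg: "0 \<le> p x * D x"
proof (cases "p x = 0")
  case True then show ?thesis by simp
next
  case False
  then have P: "0 < p x" using pnn[of x] by simp
  then have Q: "0 < q x" by (rule qpos)
  have Ths: "(T x has_sum ((Sh x - h x) / p x)) UNIV"
    using T_has_sum[of x] has_sum_cmult_right_iff[of "p x" "T x"] P by simp
  have Phs: "((\<lambda>a. condp p x a) has_sum 1) UNIV"
    using has_sum_cmult_right[OF phs[of x], of "1 / p x"] P by (simp add: condp_def)
  have Qhs: "((\<lambda>a. condp q x a) has_sum 1) UNIV"
    using has_sum_cmult_right[OF qhs[of x], of "1 / q x"] Q by (simp add: condp_def)
  have PQ: "((\<lambda>a. condp p x a - condp q x a) has_sum 0) UNIV"
    using has_sum_diff'[OF Phs Qhs] by simp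
  have "0 \<le> D x"
  proof -
    have "infsum (\<lambda>a. condp p x a - condp q x a) UNIV \<le> infsum (T x) UNIV"
    proof (rule infsum_mono)
      show "(\<lambda>a. condp p x a - condp q x a) summable_on UNIV" using PQ by (auto simp: summable_on_def)
      show "T x summable_on UNIV" using Ths by (auto simp: summable_on_def)
      fix a
      show "condp p x a - condp q x a \<le> T x a" unfolding T_def
      proof (rule gibbs_pt)
        show "0 \<le> condp p x a" using pnn P by (simp add: condp_def)
        show "0 \<le> condp q x a" using qnn Q by (simp add: condp_def)
        assume "0 < condp p x a"
        then have "0 < p (x @ [a])" using P by (simp add: condp_def zero_less_divide_iff)
        then show "0 < condp q x a" using qpos Q by (simp add: condp_def)
      qed
    qed
    then show ?thesis using PQ by (simp add: D_def infsumI)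
  qed
  then show ?thesis using P by simp
qed

lemma level_sum: "((\<lambda>x. p x * D x) has_sum (H (Suc t) - H t)) {x. length x = t}"
proof -
  have 1: "(Sh has_sum H (Suc t)) {x. length x = t}"
    by (rule level_down[where f = h]) (use h_summable_L h_summable_A in \<open>auto simp: H_def Sh_def\<close>)
  have 2: "(h has_sum H t) {x. length x = t}" using h_summable_L by (simp add: H_def)
  show ?thesis using has_sum_diff'[OF 1 2] by (simp add: pD)
qed

lemma H0: "H 0 = 0"
proof -
  have "{x::'a list. length x = 0} = {[]}" by auto
  then show ?thesis by (simp add: H_def h_def p0 q0)
qed

lemma HN: "H n \<le> c"
proof -
  have sp: "p summable_on {x. length x = n}" using pL by (auto simp: summable_on_def)
  have "H n \<le> infsum (\<lambda>x. c * p x) {x. length x = n}" unfolding H_def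
    by (rule infsum_mono) (use h_summable_L summable_on_cmult_right[OF sp] h_le in auto)
  also have "\<dots> = c" using has_sum_cmult_right[OF pL, of c] by (simp add: infsumI)
  finally show ?thesis .
qed

lemma main_bound: "(\<Sum>t. infsum (\<lambda>x. ennreal (p x * D x)) {x. length x = t}) \<le> ennreal c"
proof -
  have eq: "infsum (\<lambda>x. ennreal (p x * D x)) {x. length x = t} = ennreal (H (Suc t) - H t)" for t
  proof -
    have "infsum (\<lambda>x. ennreal (p x * D x)) {x. length x = t} = ennreal (infsum (\<lambda>x. p x * D x) {x. length x = t})"
      by (rule ennreal_infsum) (use level_sum[of t] D_nonneg in \<open>auto simp: summable_on_def\<close>)
    then show ?thesis using level_sum[of t] by (simp add: infsumI)
  qed
  have nn: "0 \<le> H (Suc t) - H t" for t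
    using has_sum_nonneg[OF level_sum[of t]] D_nonneg by auto
  have "(\<Sum>t. infsum (\<lambda>x. ennreal (p x * D x)) {x. length x = t}) = (SUP n. \<Sum>t<n. ennreal (H (Suc t) - H t))"
    by (simp add: eq suminf_eq_SUP)
  also have "\<dots> \<le> ennreal c"
  proof (rule SUP_least)
    fix n
    have "(\<Sum>t<n. ennreal (H (Suc t) - H t)) = ennreal (\<Sum>t<n. H (Suc t) - H t)"
      using nn by simp
    also have "\<dots> = ennreal (H n)" by (simp add: sum_lessThan_telescope H0)
    also have "\<dots> \<le> ennreal c" using HN by (rule ennreal_leI)
    finally show "(\<Sum>t<n. ennreal (H (Suc t) - H t)) \<le> ennreal c" .
  qed
  finally show ?thesis .
qed

end

context tctx begin

lemma kl_inst: assumes "\<nu> \<in> M" shows "kl (mcyl \<nu>) (xi M w) (w \<nu>)"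
  by unfold_locales (use assms mcyl_nonneg mcyl_has_sum mcyl_nil xi_has_sum xi_nil xi_ge wpos in auto)

lemma per_nu: assumes "\<nu> \<in> M"
  shows "(\<Sum>t. infsum (\<lambda>x. ennreal (mcyl \<nu> x * dkl M w \<nu> x)) {x. length x = t}) \<le> ennreal (- ln (w \<nu>))"
proof -
  interpret K: kl "mcyl \<nu>" "xi M w" "w \<nu>" by (rule kl_inst[OF assms])
  have "dkl M w \<nu> x = K.D x" for x unfolding dkl_def K.D_def by (rule infsum_cong) (simp add: K.T_def)
  then show ?thesis using K.main_bound by (simp add: K.c_def)
qed

lemma XPD: assumes "\<nu> \<in> M" shows "xi M w x * post M w \<nu> x = w \<nu> * mcyl \<nu> x"
proof (cases "xi M w x = 0")
  case True
  then have "w \<nu> * mcyl \<nu> x = 0" using xi_ge[OF assms, of x] wm_nonneg[OF assms, of x] by simp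
  then show ?thesis using True by simp
next
  case False then show ?thesis by (simp add: post_def)
qed

lemma countable_L: "countable {x::'a list. length x = t}"
  by (rule countable_subset[of _ UNIV]) auto

lemma EXP: assumes "\<mu> \<in> M"
  shows "(\<integral>\<^sup>+\<omega>. g (stake t \<omega>) \<partial>\<mu>) = infsum (\<lambda>x. g x * ennreal (mcyl \<mu> x)) {x. length x = t}"
proof -
  let ?L = "{x::'a list. length x = t}"
  have pt: "g (stake t \<omega>) = (\<integral>\<^sup>+x. g x * indicator (cyl x) \<omega> \<partial>count_space ?L)" for \<omega>
    by (subst nn_integral_count_space'[of "{stake t \<omega>}"]) (auto simp: cyl_def split: split_indicator)
  have "(\<integral>\<^sup>+\<omega>. g (stake t \<omega>) \<partial>\<mu>) = (\<integral>\<^sup>+\<omega>. (\<integral>\<^sup>+x. g x * indicator (cyl x) \<omega> \<partial>count_space ?L) \<partial>\<mu>)"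
    by (simp only: pt[symmetric])
  also have "\<dots> = (\<integral>\<^sup>+x. (\<integral>\<^sup>+\<omega>. g x * indicator (cyl x) \<omega> \<partial>\<mu>) \<partial>count_space ?L)"
    by (rule nn_integral_count_space_nn_integral[OF countable_L])
       (use cyl_sets[OF assms] borel_measurable_indicator in auto)
  also have "\<dots> = (\<integral>\<^sup>+x. g x * ennreal (mcyl \<mu> x) \<partial>count_space ?L)"
    by (simp add: nn_integral_cmult_indicator cyl_sets[OF assms] emeasure_cyl[OF assms])
  also have "\<dots> = infsum (\<lambda>x. g x * ennreal (mcyl \<mu> x)) ?L"
    by (rule infsum_nn_integral[OF countable_L, symmetric])
  finally show ?thesis .
qed

lemma nat_infsum: "infsum (X :: nat \<Rightarrow> ennreal) UNIV = (\<Sum>t. X t)"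
  by (simp only: infsum_nn_integral[OF countableI_type] nn_integral_count_space_nat)

lemma SW:
  fixes f :: "nat \<Rightarrow> 'b \<Rightarrow> ennreal"
  assumes "countable A"
  shows "(\<Sum>t. infsum (\<lambda>\<nu>. f t \<nu>) A) = infsum (\<lambda>\<nu>. \<Sum>t. f t \<nu>) A"
proof -
  have "(\<Sum>t. infsum (\<lambda>\<nu>. f t \<nu>) A) = infsum (\<lambda>t. infsum (\<lambda>\<nu>. f t \<nu>) A) UNIV"
    by (rule nat_infsum[symmetric])
  also have "\<dots> = infsum (\<lambda>\<nu>. infsum (\<lambda>t. f t \<nu>) UNIV) A"
    by (rule ens_swap) (use assms in auto)
  also have "\<dots> = infsum (\<lambda>\<nu>. \<Sum>t. f t \<nu>) A"
    by (rule infsum_cong) (rule nat_infsum)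
  finally show ?thesis .
qed

end

theorem theorem7:
  fixes M :: "('a::countable) stream measure set"
    and w :: "'a stream measure \<Rightarrow> real"
    and \<mu> :: "'a stream measure"
    and \<delta> :: real
  assumes "countable M"
    and "\<And>\<nu>. \<nu> \<in> M \<Longrightarrow> sets \<nu> = sets (stream_space (count_space UNIV))"
    and "\<And>\<nu>. \<nu> \<in> M \<Longrightarrow> prob_space \<nu>"
    and "\<And>\<nu>. \<nu> \<in> M \<Longrightarrow> 0 < w \<nu> \<and> w \<nu> \<le> 1"
    and "(w has_sum 1) M"
    and "\<mu> \<in> M"
    and "0 < \<delta>" and "\<delta> < 1"
  shows "((\<integral>\<^sup>+ \<omega>. (\<Sum>t. dhat M w \<mu> \<delta> (Suc t) \<omega>) \<partial>\<mu>)
           \<le> Ent M w / ennreal (\<delta> * (w \<mu>)\<^sup>2))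
         \<and> measure \<mu> {\<omega> \<in> space \<mu>. (\<Sum>t. dhat M w \<mu> \<delta> (Suc t) \<omega>)
                                    \<le> Ent M w / ennreal (\<delta>\<^sup>2 * (w \<mu>)\<^sup>2)} \<ge> 1 - \<delta>"
proof -
  interpret tctx M w by (rule tctx.intro[OF assms(1-5)])
  have \<mu>M: "\<mu> \<in> M" and d0: "0 < \<delta>" and d1: "\<delta> < 1" using assms(6-8) by auto
  have w\<mu>: "0 < w \<mu>" using wpos[OF \<mu>M] by simp
  interpret P: prob_space \<mu> by (rule probM[OF \<mu>M])
  define G where "G x = infsum (\<lambda>\<nu>. ennreal (post M w \<nu> x * dkl M w \<nu> x)) M" for x
  define cst where "cst = 1 / (w \<mu> * \<delta>)"
  have cst_pos: "0 < cst" unfolding cst_def using w\<mu> d0 by simp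
  have dh: "dhat M w \<mu> \<delta> (Suc t) \<omega> = G (stake t \<omega>) * ennreal cst" for t \<omega>
    unfolding dhat_def ct_def G_def cst_def divide_ennreal_def
    using w\<mu> d0 by (simp add: inverse_ennreal inverse_eq_divide)
  define Z where "Z \<omega> = (\<Sum>t. dhat M w \<mu> \<delta> (Suc t) \<omega>)" for \<omega>
  have mst: "stake t \<in> measurable \<mu> (count_space UNIV)" for t
    using measurable_stake measurable_cong_sets[OF setsM[OF \<mu>M] refl] by blast
  have mdh: "(\<lambda>\<omega>. dhat M w \<mu> \<delta> (Suc t) \<omega>) \<in> borel_measurable \<mu>" for t
    unfolding dh by (rule measurable_compose[OF mst, where g = "\<lambda>x. G x * ennreal cst"]) simp
  have mZ[measurable]: "Z \<in> borel_measurable \<mu>"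
    unfolding Z_def by (rule borel_measurable_suminf_order) (rule mdh)
  define C where "C = ennreal (cst / w \<mu>)"
  define A where "A \<nu> x = ennreal (w \<nu>) * ennreal (mcyl \<nu> x * dkl M w \<nu> x)" for \<nu> x
  have GX: "G x * ennreal (xi M w x) = infsum (\<lambda>\<nu>. A \<nu> x) M" for x
  proof -
    have "G x * ennreal (xi M w x) = ennreal (xi M w x) * G x" by (simp add: mult.commute)
    also have "\<dots> = infsum (\<lambda>\<nu>. ennreal (xi M w x) * ennreal (post M w \<nu> x * dkl M w \<nu> x)) M"
      unfolding G_def by (rule ens_cmult[OF cM, symmetric])
    also have "\<dots> = infsum (\<lambda>\<nu>. A \<nu> x) M"
    proof (rule infsum_cong)
      fix \<nu> assume n: "\<nu> \<in> M"
      have "ennreal (xi M w x) * ennreal (post M w \<nu> x * dkl M w \<nu> x) = ennreal (xi M w x * (post M w \<nu> x * dkl M w \<nu> x))"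
        using xi_nonneg by (simp add: ennreal_mult')
      also have "xi M w x * (post M w \<nu> x * dkl M w \<nu> x) = (xi M w x * post M w \<nu> x) * dkl M w \<nu> x"
        by (simp add: mult.assoc)
      also have "\<dots> = w \<nu> * (mcyl \<nu> x * dkl M w \<nu> x)" using XPD[OF n, of x] by (simp add: mult.assoc)
      also have "ennreal (w \<nu> * (mcyl \<nu> x * dkl M w \<nu> x)) = A \<nu> x"
        unfolding A_def using wpos[OF n] by (simp add: ennreal_mult')
      finally show "ennreal (xi M w x) * ennreal (post M w \<nu> x * dkl M w \<nu> x) = A \<nu> x" .
    qed
    finally show ?thesis .
  qed
  have bnd: "G x * ennreal cst * ennreal (mcyl \<mu> x) \<le> C * infsum (\<lambda>\<nu>. A \<nu> x) M" for x
  proof -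
    have "mcyl \<mu> x \<le> (1 / w \<mu>) * xi M w x" using xi_ge[OF \<mu>M, of x] w\<mu> by (simp add: field_simps)
    then have "ennreal (mcyl \<mu> x) \<le> ennreal ((1 / w \<mu>) * xi M w x)" by (rule ennreal_leI)
    also have "\<dots> = ennreal (1 / w \<mu>) * ennreal (xi M w x)" using w\<mu> by (intro ennreal_mult') simp
    finally have "G x * ennreal cst * ennreal (mcyl \<mu> x) \<le> G x * ennreal cst * (ennreal (1 / w \<mu>) * ennreal (xi M w x))"
      by (rule mult_left_mono) simp
    also have "\<dots> = (ennreal cst * ennreal (1 / w \<mu>)) * (G x * ennreal (xi M w x))" by (simp add: ac_simps)
    also have "ennreal cst * ennreal (1 / w \<mu>) = C"
      unfolding C_def using cst_pos by (simp add: ennreal_mult'[symmetric])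
    finally show ?thesis using GX by simp
  qed
  have E_eq: "(\<integral>\<^sup>+\<omega>. Z \<omega> \<partial>\<mu>) = (\<Sum>t. infsum (\<lambda>x. G x * ennreal cst * ennreal (mcyl \<mu> x)) {x. length x = t})"
  proof -
    have "(\<integral>\<^sup>+\<omega>. Z \<omega> \<partial>\<mu>) = (\<Sum>t. \<integral>\<^sup>+\<omega>. dhat M w \<mu> \<delta> (Suc t) \<omega> \<partial>\<mu>)"
      unfolding Z_def by (rule nn_integral_suminf[OF mdh])
    also have "\<dots> = (\<Sum>t. infsum (\<lambda>x. G x * ennreal cst * ennreal (mcyl \<mu> x)) {x. length x = t})"
    proof (rule suminf_cong)
      fix t
      show "(\<integral>\<^sup>+\<omega>. dhat M w \<mu> \<delta> (Suc t) \<omega> \<partial>\<mu>) = infsum (\<lambda>x. G x * ennreal cst * ennreal (mcyl \<mu> x)) {x. length x = t}"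
        using EXP[OF \<mu>M, of "\<lambda>x. G x * ennreal cst" t] by (simp add: dh)
    qed
    finally show ?thesis .
  qed
  have E_le: "(\<integral>\<^sup>+\<omega>. Z \<omega> \<partial>\<mu>) \<le> C * Ent M w"
  proof -
    have "(\<integral>\<^sup>+\<omega>. Z \<omega> \<partial>\<mu>) \<le> (\<Sum>t. infsum (\<lambda>x. C * infsum (\<lambda>\<nu>. A \<nu> x) M) {x. length x = t})"
      unfolding E_eq by (intro suminf_le ens_mono bnd) auto
    also have "\<dots> = (\<Sum>t. C * infsum (\<lambda>\<nu>. infsum (\<lambda>x. A \<nu> x) {x. length x = t}) M)"
    proof (rule suminf_cong)
      fix t
      have "infsum (\<lambda>x. C * infsum (\<lambda>\<nu>. A \<nu> x) M) {x. length x = t}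
          = C * infsum (\<lambda>x. infsum (\<lambda>\<nu>. A \<nu> x) M) {x. length x = t}"
        by (rule ens_cmult[OF countable_L])
      also have "infsum (\<lambda>x. infsum (\<lambda>\<nu>. A \<nu> x) M) {x. length x = t}
          = infsum (\<lambda>\<nu>. infsum (\<lambda>x. A \<nu> x) {x. length x = t}) M"
        by (rule ens_swap[OF countable_L cM])
      finally show "infsum (\<lambda>x. C * infsum (\<lambda>\<nu>. A \<nu> x) M) {x. length x = t}
          = C * infsum (\<lambda>\<nu>. infsum (\<lambda>x. A \<nu> x) {x. length x = t}) M" .
    qed
    also have "\<dots> = C * infsum (\<lambda>\<nu>. \<Sum>t. infsum (\<lambda>x. A \<nu> x) {x. length x = t}) M"
      by (simp add: SW[OF cM])
    also have "\<dots> \<le> C * Ent M w"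
    proof (rule mult_left_mono)
      show "infsum (\<lambda>\<nu>. \<Sum>t. infsum (\<lambda>x. A \<nu> x) {x. length x = t}) M \<le> Ent M w"
        unfolding Ent_def
      proof (rule ens_mono)
        fix \<nu> assume n: "\<nu> \<in> M"
        have "(\<Sum>t. infsum (\<lambda>x. A \<nu> x) {x. length x = t})
            = ennreal (w \<nu>) * (\<Sum>t. infsum (\<lambda>x. ennreal (mcyl \<nu> x * dkl M w \<nu> x)) {x. length x = t})"
          unfolding A_def by (simp add: ens_cmult[OF countable_L])
        also have "\<dots> \<le> ennreal (w \<nu>) * ennreal (- ln (w \<nu>))"
          by (rule mult_left_mono[OF per_nu[OF n]]) simp
        also have "\<dots> = ennreal (- w \<nu> * ln (w \<nu>))" using wpos[OF n] by (simp add: ennreal_mult'[symmetric])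
        finally show "(\<Sum>t. infsum (\<lambda>x. A \<nu> x) {x. length x = t}) \<le> ennreal (- w \<nu> * ln (w \<nu>))" .
      qed
    qed simp
    finally show ?thesis .
  qed
  have creal: "cst / w \<mu> = inverse (\<delta> * (w \<mu>)\<^sup>2)"
    unfolding cst_def using w\<mu> d0 by (simp add: field_simps power2_eq_square)
  have C_eq: "C * Ent M w = Ent M w / ennreal (\<delta> * (w \<mu>)\<^sup>2)"
    unfolding C_def divide_ennreal_def creal using w\<mu> d0 by (simp add: inverse_ennreal mult.commute)
  have part1: "(\<integral>\<^sup>+\<omega>. Z \<omega> \<partial>\<mu>) \<le> Ent M w / ennreal (\<delta> * (w \<mu>)\<^sup>2)"
    using E_le C_eq by simp
  define T where "T = Ent M w / ennreal (\<delta>\<^sup>2 * (w \<mu>)\<^sup>2)"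
  define B where "B = {\<omega> \<in> space \<mu>. T < Z \<omega>}"
  have Bm: "B \<in> sets \<mu>" unfolding B_def by measurable
  have BE: "emeasure \<mu> B \<le> ennreal \<delta>"
  proof (cases "Ent M w" rule: ennreal_cases)
    case top
    have "T = top" unfolding T_def top using w\<mu> d0 by (simp add: ennreal_top_divide)
    then have "B = {}" unfolding B_def by auto
    then show ?thesis by simp
  next
    case (real e)
    show ?thesis
    proof (cases "e = 0")
      case True
      have "(\<integral>\<^sup>+\<omega>. Z \<omega> \<partial>\<mu>) = 0" using E_le real True by simp
      then have "AE \<omega> in \<mu>. Z \<omega> = 0" using nn_integral_0_iff_AE[OF mZ] by simp
      then have "AE \<omega> in \<mu>. \<not> T < Z \<omega>" by eventually_elim simp
      then have "emeasure \<mu> B = 0" using AE_iff_measurable[OF Bm, of "\<lambda>\<omega>. \<not> T < Z \<omega>"] unfolding B_def by simp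
      then show ?thesis by simp
    next
      case False
      then have e0: "0 < e" using real by simp
      define tt where "tt = e / (\<delta>\<^sup>2 * (w \<mu>)\<^sup>2)"
      have tt0: "0 < tt" unfolding tt_def using e0 w\<mu> d0 by simp
      have T_eq: "T = ennreal tt" unfolding T_def tt_def real using w\<mu> d0 e0 by (simp add: divide_ennreal)
      have mk: "(\<lambda>x. Z x * indicator (space \<mu>) x) \<in> borel_measurable \<mu>" by measurable
      have mark: "emeasure \<mu> {x \<in> space \<mu>. 1 \<le> ennreal (1 / tt) * Z x}
          \<le> ennreal (1 / tt) * (\<integral>\<^sup>+x. Z x * indicator (space \<mu>) x \<partial>\<mu>)"
        by (rule nn_integral_Markov_inequality[OF mk]) simp
      have "(\<integral>\<^sup>+x. Z x * indicator (space \<mu>) x \<partial>\<mu>) = (\<integral>\<^sup>+x. Z x \<partial>\<mu>)"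
        by (rule nn_integral_cong) simp
      have sub: "B \<subseteq> {x \<in> space \<mu>. 1 \<le> ennreal (1 / tt) * Z x}"
      proof
        fix x assume "x \<in> B"
        then have x: "x \<in> space \<mu>" "ennreal tt < Z x" unfolding B_def T_eq by auto
        have "ennreal (1 / tt) * ennreal tt \<le> ennreal (1 / tt) * Z x"
          using x(2) by (intro mult_left_mono) auto
        moreover have "ennreal (1 / tt) * ennreal tt = 1" using tt0 by (simp add: ennreal_mult'[symmetric])
        ultimately show "x \<in> {x \<in> space \<mu>. 1 \<le> ennreal (1 / tt) * Z x}" using x(1) by simp
      qed
      have "emeasure \<mu> B \<le> emeasure \<mu> {x \<in> space \<mu>. 1 \<le> ennreal (1 / tt) * Z x}"
        by (rule emeasure_mono[OF sub]) simp
      also have "\<dots> \<le> ennreal (1 / tt) * (\<integral>\<^sup>+x. Z x \<partial>\<mu>)"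
        using mark \<open>(\<integral>\<^sup>+x. Z x * indicator (space \<mu>) x \<partial>\<mu>) = (\<integral>\<^sup>+x. Z x \<partial>\<mu>)\<close> by simp
      also have "\<dots> \<le> ennreal (1 / tt) * (C * ennreal e)"
        using E_le real by (intro mult_left_mono) auto
      also have "ennreal (1 / tt) * (C * ennreal e) = ennreal ((1 / tt) * ((cst / w \<mu>) * e))"
        unfolding C_def using tt0 cst_pos w\<mu> e0 by (simp add: ennreal_mult'[symmetric])
      also have "(1 / tt) * ((cst / w \<mu>) * e) = \<delta>"
        unfolding tt_def cst_def using e0 w\<mu> d0 by (simp add: field_simps power2_eq_square)
      finally show ?thesis .
    qed
  qed
  have mB: "measure \<mu> B \<le> \<delta>"
    using BE P.emeasure_eq_measure[of B] d0 by simp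
  have "{\<omega> \<in> space \<mu>. Z \<omega> \<le> T} = space \<mu> - B" unfolding B_def by auto
  then have "measure \<mu> {\<omega> \<in> space \<mu>. Z \<omega> \<le> T} = 1 - measure \<mu> B"
    using P.prob_compl[OF Bm] by simp
  then have part2: "measure \<mu> {\<omega> \<in> space \<mu>. Z \<omega> \<le> T} \<ge> 1 - \<delta>" using mB by simp
  show ?thesis using part1 part2 unfolding Z_def T_def by simp
qed

end
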